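(* Let $P$ be a treetope with base $B$, and let $F$ be a nonempty face of $B$. Then there is exactly one face $F'$ of $P$ such that $F'\ne F$ and $F'\cap B=F$.
   Context: A polytope is the convex hull of a finite set of points in a Euclidean space; faces, vertices, edges, facets and the graph (1-skeleton) are as usual. A \emph{treetope} is a polytope $P$ together with a distinguished facet $B$ (the \emph{base}) such that every face $F$ of $P$ whose intersection $F\cap B$ consists of at most one point has dimension at most one. The face $F'$ in the statement is called the \emph{lift} of $F$. *)

theory Defs
  imports "HOL-Analysis.Analysis"
begin

definition treetope :: "'a::euclidean_space set \<Rightarrow> 'a set \<Rightarrow> bool" where
  "treetope P B \<longleftrightarrow> polytope P \<and> B facet_of P \<and>
     (\<forall>F. F face_of P \<longrightarrow> (\<forall>x\<in>F \<inter> B. \<forall>y\<in>F \<inter> B. x = y) \<longrightarrow> aff_dim F \<le> 1)"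

end

theory Submission
  imports Defs
begin

lemma small_step:
  fixes \<alpha> \<beta> \<gamma> :: "'b \<Rightarrow> real"
  assumes "finite H" "\<And>h. h \<in> H \<Longrightarrow> \<alpha> h < \<beta> h"
  shows "\<exists>t>0. \<forall>t'. 0 < t' \<and> t' \<le> t \<longrightarrow> (\<forall>h\<in>H. \<alpha> h + t' * \<gamma> h \<le> \<beta> h)"
  using assms
proof (induction H rule: finite_induct)
  case empty
  then show ?case by (intro exI[of _ 1]) auto
next
  case (insert h H)
  then obtain t where t: "t > 0" "\<forall>t'. 0 < t' \<and> t' \<le> t \<longrightarrow> (\<forall>h\<in>H. \<alpha> h + t' * \<gamma> h \<le> \<beta> h)"
    by auto
  have ab: "\<alpha> h < \<beta> h" using insert by auto
  show ?case
  proof (cases "\<gamma> h \<le> 0")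
    case True
    show ?thesis
    proof (intro exI[of _ t] conjI allI impI ballI)
      fix t' h' assume "0 < t' \<and> t' \<le> t" "h' \<in> insert h H"
      then show "\<alpha> h' + t' * \<gamma> h' \<le> \<beta> h'"
        using t True ab by (auto simp: mult_nonneg_nonpos) (smt (verit) mult_nonneg_nonpos)
    qed (use t in auto)
  next
    case False
    define t1 where "t1 = min t ((\<beta> h - \<alpha> h) / \<gamma> h)"
    have t1: "t1 > 0" using t False ab by (auto simp: t1_def)
    show ?thesis
    proof (intro exI[of _ t1] conjI allI impI ballI)
      fix t' h' assume tt: "0 < t' \<and> t' \<le> t1" "h' \<in> insert h H"
      show "\<alpha> h' + t' * \<gamma> h' \<le> \<beta> h'"
      proof (cases "h' = h")
        case True
        have "t' \<le> (\<beta> h - \<alpha> h) / \<gamma> h" using tt by (simp add: t1_def)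
        then have "t' * \<gamma> h \<le> \<beta> h - \<alpha> h" using False by (simp add: pos_le_divide_eq)
        then show ?thesis using True by simp
      next
        case False
        then show ?thesis using t tt by (auto simp: t1_def)
      qed
    qed (use t1 in auto)
  qed
qed



lemma facet_above:
  fixes S :: "'a::euclidean_space set"
  assumes poly: "polyhedron S" and F0: "F0 face_of S" "F0 \<noteq> {}"
    and codim: "aff_dim F0 + 1 < aff_dim S"
    and gF0: "\<And>x. x \<in> F0 \<Longrightarrow> g \<bullet> x = c" and y: "y \<in> S" "g \<bullet> y > c"
  shows "\<exists>K. K facet_of S \<and> F0 \<subseteq> K \<and> (\<exists>z\<in>K. g \<bullet> z > c)"
proof -
  obtain \<F> where fin: "finite \<F>" and seq: "S = affine hull S \<inter> \<Inter>\<F>"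
     and faces: "\<And>h. h \<in> \<F> \<Longrightarrow> \<exists>a b. a \<noteq> 0 \<and> h = {x. a \<bullet> x \<le> b}"
     and min: "\<And>F'. F' \<subset> \<F> \<Longrightarrow> S \<subset> affine hull S \<inter> \<Inter>F'"
    using poly by (simp add: polyhedron_Int_affine_minimal) meson
  then obtain a b where ab: "\<And>h. h \<in> \<F> \<Longrightarrow> a h \<noteq> 0 \<and> h = {x. a h \<bullet> x \<le> b h}"
    by metis
  have facet_iff: "\<And>C. C facet_of S \<longleftrightarrow> (\<exists>h\<in>\<F>. C = S \<inter> {x. a h \<bullet> x = b h})"
    using facet_of_polyhedron_explicit[OF fin seq ab min] by blast
  have Sle: "a h \<bullet> x \<le> b h" if "h\<in>\<F>" "x \<in> S" for h x
  proof -
    have "x \<in> h" using that seq by blast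
    then show ?thesis using ab[OF that(1)] by blast
  qed
  have inS: "x \<in> S" if "x \<in> affine hull S" "\<And>h. h \<in> \<F> \<Longrightarrow> a h \<bullet> x \<le> b h" for x
  proof -
    have "x \<in> \<Inter>\<F>" using that ab by blast
    then show ?thesis using that(1) seq by blast
  qed
  have convS: "convex S" using poly polyhedron_imp_convex by blast
  have F0S: "F0 \<noteq> S" using codim by auto
  have F0eq: "F0 = \<Inter>{F. F facet_of S \<and> F0 \<subseteq> F}"
    using face_of_polyhedron[OF poly F0(1) F0(2) F0S] .
  have convF0: "convex F0" using F0 face_of_imp_convex by blast
  obtain p where p: "p \<in> rel_interior F0"
    using F0 convF0 rel_interior_eq_empty by blast
  have pF0: "p \<in> F0" using p rel_interior_subset by blast
  have F0sub: "F0 \<subseteq> S" using F0 face_of_imp_subset by blast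
  have pS: "p \<in> S" using pF0 F0sub by blast
  define \<F>0 where "\<F>0 = {h\<in>\<F>. F0 \<subseteq> {x. a h \<bullet> x = b h}}"
  have tight: "\<And>h. h\<in>\<F>0 \<Longrightarrow> a h \<bullet> p = b h" using pF0 by (auto simp: \<F>0_def)
  have strict: "a h \<bullet> p < b h" if h: "h\<in>\<F>" "h \<notin> \<F>0" for h
  proof (rule ccontr)
    assume "\<not> a h \<bullet> p < b h"
    then have eq: "a h \<bullet> p = b h" using Sle[OF h(1) pS] by linarith
    have fc: "(F0 \<inter> {x. a h \<bullet> x = b h}) face_of F0"
      using face_of_Int_supporting_hyperplane_le[OF convF0, of "a h" "b h"] Sle h F0sub by blast
    have "F0 \<inter> {x. a h \<bullet> x = b h} = F0"
      using face_of_disjoint_rel_interior[OF fc] p eq pF0 by blast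
    then show False using h by (auto simp: \<F>0_def)
  qed
  define d where "d = y - p"
  have gd: "g \<bullet> d > 0" using y gF0[OF pF0] by (simp add: d_def inner_diff_right)
  have dF: "a h \<bullet> d \<le> 0" if "h\<in>\<F>0" for h
  proof -
    have "h \<in> \<F>" using that by (simp add: \<F>0_def)
    then have "a h \<bullet> y \<le> b h" using Sle y(1) by blast
    then show ?thesis using tight[OF that] by (simp add: d_def inner_diff_right)
  qed
  define L where "L = span ((+) (-p) ` S)"
  define W where "W = span ((+) (-p) ` F0)"
  have pA: "p \<in> affine hull S" using hull_inc[OF pS] .
  have affS: "affine hull S = (\<lambda>x. p+x) ` L"
    unfolding L_def using affine_hull_span_gen[OF pA] by simp
  have dimL: "aff_dim S = int (dim ((+) (-p) ` S))" using aff_dim_eq_dim[OF pA] .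
  have dimW: "aff_dim F0 = int (dim ((+) (-p) ` F0))"
    using aff_dim_eq_dim[OF hull_inc[OF pF0]] .
  have dL: "d \<in> L" unfolding L_def d_def using y(1)
    by (intro span_base) (auto intro!: image_eqI[of _ _ y])
  have ex_e: "\<exists>e\<in>L. g \<bullet> e = 0 \<and> e \<notin> W"
  proof (rule ccontr)
    assume "\<not> ?thesis"
    then have H: "\<And>e. e \<in> L \<Longrightarrow> g \<bullet> e = 0 \<Longrightarrow> e \<in> W" by blast
    have "(+) (-p) ` S \<subseteq> span (insert d W)"
    proof
      fix v assume v: "v \<in> (+) (-p) ` S"
      then have vL: "v \<in> L" unfolding L_def by (rule span_base)
      define w where "w = v - ((g \<bullet> v) / (g \<bullet> d)) *\<^sub>R d"
      have "w \<in> L" unfolding w_def using vL dL by (simp add: L_def span_diff span_scale)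
      moreover have "g \<bullet> w = 0" using gd by (simp add: w_def inner_diff_right)
      ultimately have "w \<in> W" using H by blast
      then have "w \<in> span (insert d W)" by (simp add: span_base)
      moreover have "d \<in> span (insert d W)" by (simp add: span_base)
      ultimately have "w + ((g \<bullet> v) / (g \<bullet> d)) *\<^sub>R d \<in> span (insert d W)"
        by (simp add: span_add span_scale)
      then show "v \<in> span (insert d W)" by (simp add: w_def)
    qed
    then have "dim ((+) (-p) ` S) \<le> dim (insert d W)" by (rule dim_mono)
    also have "\<dots> \<le> dim W + 1" by (simp add: dim_insert)
    also have "dim W = dim ((+) (-p) ` F0)" by (simp add: W_def)
    finally show False using dimL dimW codim by linarith
  qed
  then obtain e0 where e0: "e0 \<in> L" "g \<bullet> e0 = 0" "e0 \<notin> W" by blast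
  have some_nz: "\<exists>h\<in>\<F>0. a h \<bullet> e0 \<noteq> 0"
  proof (rule ccontr)
    assume "\<not> ?thesis"
    then have z0: "\<And>h. h\<in>\<F>0 \<Longrightarrow> a h \<bullet> e0 = 0" by blast
    have finR: "finite (\<F> - \<F>0)" using fin by simp
    obtain t where t: "t > 0" "\<forall>t'. 0 < t' \<and> t' \<le> t \<longrightarrow> (\<forall>h\<in>\<F> - \<F>0. a h \<bullet> p + t' * (a h \<bullet> e0) \<le> b h)"
      using small_step[OF finR, of "\<lambda>h. a h \<bullet> p" b "\<lambda>h. a h \<bullet> e0"] strict by blast
    define q where "q = p + t *\<^sub>R e0"
    have qA: "q \<in> affine hull S" unfolding affS q_def using e0(1)
      by (intro image_eqI[of _ _ "t *\<^sub>R e0"]) (auto simp: L_def span_scale)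
    have qle: "a h \<bullet> q \<le> b h" if "h \<in> \<F>" for h
    proof (cases "h \<in> \<F>0")
      case True then show ?thesis using tight z0 by (simp add: q_def inner_add_right)
    next
      case False then show ?thesis using t that by (auto simp: q_def inner_add_right)
    qed
    have qS: "q \<in> S" using inS qA qle by blast
    have "q \<in> F" if FS: "F facet_of S" and F0F: "F0 \<subseteq> F" for F
    proof -
      obtain h where h: "h \<in> \<F>" "F = S \<inter> {x. a h \<bullet> x = b h}" using facet_iff[THEN iffD1, OF FS] by blast
      then have "F0 \<subseteq> {x. a h \<bullet> x = b h}" using F0F by blast
      then have "h \<in> \<F>0" using h(1) by (simp add: \<F>0_def)
      then show ?thesis using h qS tight z0 by (simp add: q_def inner_add_right)
    qed
    then have "q \<in> \<Inter>{F. F facet_of S \<and> F0 \<subseteq> F}" by blast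
    then have "q \<in> F0" using F0eq by simp
    then have "t *\<^sub>R e0 \<in> W" unfolding W_def
      by (intro span_base) (auto simp: q_def intro!: image_eqI[of _ _ q])
    then have "(1/t) *\<^sub>R (t *\<^sub>R e0) \<in> W" unfolding W_def by (rule span_scale)
    then show False using e0 t by simp
  qed
  obtain e where e: "e \<in> L" "g \<bullet> e = 0" "\<exists>h\<in>\<F>0. a h \<bullet> e > 0"
  proof -
    obtain h where h: "h\<in>\<F>0" "a h \<bullet> e0 \<noteq> 0" using some_nz by blast
    show ?thesis
    proof (cases "a h \<bullet> e0 > 0")
      case True then show ?thesis using that e0 h by blast
    next
      case False
      then have "a h \<bullet> (-e0) > 0" using h by simp
      moreover have "-e0 \<in> L" using e0 by (simp add: L_def span_neg)
      ultimately show ?thesis using that e0 h by fastforce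
    qed
  qed
  define P where "P = {h\<in>\<F>0. a h \<bullet> e > 0}"
  have finP: "finite P" using fin by (simp add: P_def \<F>0_def)
  have neP: "P \<noteq> {}" using e by (auto simp: P_def)
  define s0 where "s0 = Min ((\<lambda>h. -(a h \<bullet> d)/(a h \<bullet> e)) ` P)"
  obtain hs where hs: "hs \<in> P" "s0 = -(a hs \<bullet> d)/(a hs \<bullet> e)"
  proof -
    have "s0 \<in> (\<lambda>h. -(a h \<bullet> d)/(a h \<bullet> e)) ` P" unfolding s0_def using finP neP by (intro Min_in) auto
    then show ?thesis using that by blast
  qed
  have s0le: "s0 \<le> -(a h \<bullet> d)/(a h \<bullet> e)" if "h \<in> P" for h
    unfolding s0_def using finP that by (intro Min_le) auto
  have s0ge: "s0 \<ge> 0" using hs dF[of hs] by (auto simp: P_def divide_nonpos_pos)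
  define d' where "d' = d + s0 *\<^sub>R e"
  have d'F0: "a h \<bullet> d' \<le> 0" if "h \<in> \<F>0" for h
  proof (cases "a h \<bullet> e > 0")
    case True
    then have "h \<in> P" using that by (simp add: P_def)
    then have "s0 \<le> -(a h \<bullet> d)/(a h \<bullet> e)" by (rule s0le)
    then have "s0 * (a h \<bullet> e) \<le> -(a h \<bullet> d)" using True by (metis minus_divide_left pos_le_divide_eq)
    then show ?thesis by (simp add: d'_def inner_add_right)
  next
    case False
    then have "s0 * (a h \<bullet> e) \<le> 0" using s0ge by (simp add: mult_nonneg_nonpos)
    then show ?thesis using dF[OF that] by (simp add: d'_def inner_add_right)
  qed
  have hs0: "a hs \<bullet> d' = 0" using hs by (auto simp: d'_def inner_add_right P_def inner_diff_right)
  have gd': "g \<bullet> d' = g \<bullet> d" using e by (simp add: d'_def inner_add_right)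
  have d'L: "d' \<in> L" using dL e by (simp add: d'_def L_def span_add span_scale)
  have finR: "finite (\<F> - \<F>0)" using fin by simp
  obtain t where t: "t > 0" "\<forall>t'. 0 < t' \<and> t' \<le> t \<longrightarrow> (\<forall>h\<in>\<F> - \<F>0. a h \<bullet> p + t' * (a h \<bullet> d') \<le> b h)"
    using small_step[OF finR, of "\<lambda>h. a h \<bullet> p" b "\<lambda>h. a h \<bullet> d'"] strict by blast
  define z where "z = p + t *\<^sub>R d'"
  have zA: "z \<in> affine hull S" unfolding affS z_def using d'L
    by (intro image_eqI[of _ _ "t *\<^sub>R d'"]) (auto simp: L_def span_scale)
  have zle: "a h \<bullet> z \<le> b h" if "h \<in> \<F>" for h
  proof (cases "h \<in> \<F>0")
    case True
    then have "t * (a h \<bullet> d') \<le> 0" using d'F0 t by (simp add: mult_nonneg_nonpos)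
    then show ?thesis using tight True by (simp add: z_def inner_add_right)
  next
    case False then show ?thesis using t that by (auto simp: z_def inner_add_right)
  qed
  have zS: "z \<in> S" using inS zA zle by blast
  have hsF: "hs \<in> \<F>" "hs \<in> \<F>0" using hs by (auto simp: P_def \<F>0_def)
  define K where "K = S \<inter> {x. a hs \<bullet> x = b hs}"
  have K: "K facet_of S" using facet_iff hsF unfolding K_def by blast
  have "F0 \<subseteq> K" using hsF F0sub by (auto simp: K_def \<F>0_def)
  moreover have "z \<in> K" using zS tight[OF hsF(2)] hs0 by (simp add: K_def z_def inner_add_right)
  moreover have "g \<bullet> z > c" using gF0[OF pF0] gd gd' t by (simp add: z_def inner_add_right)
  ultimately show ?thesis using K by blast
qed



lemma GSM_aux:
  fixes Q :: "'a::euclidean_space set"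
  assumes "nat (aff_dim Q - aff_dim F0) = n"
    and "polyhedron Q" "F0 face_of Q" "F0 \<noteq> {}" "\<And>x. x \<in> F0 \<Longrightarrow> g \<bullet> x = c" "y \<in> Q" "g \<bullet> y > c"
  shows "\<exists>E. E face_of Q \<and> F0 \<subseteq> E \<and> aff_dim E = aff_dim F0 + 1 \<and> (\<exists>z\<in>E. g \<bullet> z > c)"
  using assms
proof (induction n arbitrary: Q y rule: less_induct)
  case (less n)
  have "y \<notin> F0" using less.prems(5,6,7) by fastforce
  then have ne: "F0 \<noteq> Q" using less.prems(6) by blast
  have cQ: "convex Q" using less.prems(2) polyhedron_imp_convex by blast
  have lt: "aff_dim F0 < aff_dim Q" using face_of_aff_dim_lt[OF cQ less.prems(3) ne] .
  show ?case
  proof (cases "aff_dim F0 + 1 = aff_dim Q")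
    case True
    then show ?thesis using less.prems face_of_refl[OF cQ] face_of_imp_subset by metis
  next
    case False
    then have cd: "aff_dim F0 + 1 < aff_dim Q" using lt by linarith
    obtain K z where K: "K facet_of Q" "F0 \<subseteq> K" "z \<in> K" "g \<bullet> z > c"
      using facet_above[OF less.prems(2,3,4) cd less.prems(5,6,7)] by blast
    have KQ: "K face_of Q" using K(1) facet_of_imp_face_of by blast
    have pK: "polyhedron K" using face_of_polyhedron_polyhedron[OF less.prems(2) KQ] .
    have F0K: "F0 face_of K" using face_of_subset[OF less.prems(3) K(2) face_of_imp_subset[OF KQ]] .
    have dK: "aff_dim K = aff_dim Q - 1" using K(1) by (simp add: facet_of_def)
    have "nat (aff_dim K - aff_dim F0) < n" using dK less.prems(1) cd by linarith
    then obtain E where E: "E face_of K" "F0 \<subseteq> E" "aff_dim E = aff_dim F0 + 1" "\<exists>z\<in>E. g \<bullet> z > c"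
      using less.IH[OF _ refl pK F0K less.prems(4,5) K(3,4)] by blast
    then show ?thesis using face_of_trans[OF E(1) KQ] by blast
  qed
qed

lemma GSM:
  fixes Q :: "'a::euclidean_space set"
  assumes "polyhedron Q" "F0 face_of Q" "F0 \<noteq> {}" "\<And>x. x \<in> F0 \<Longrightarrow> g \<bullet> x = c" "y \<in> Q" "g \<bullet> y > c"
  shows "\<exists>E. E face_of Q \<and> F0 \<subseteq> E \<and> aff_dim E = aff_dim F0 + 1 \<and> (\<exists>z\<in>E. g \<bullet> z > c)"
  using GSM_aux[OF refl assms] .



lemma aff3_eval:
  fixes \<psi> v u w :: "'a::real_inner"
  assumes "p + q + r = 1"
  shows "\<psi> \<bullet> (p *\<^sub>R v + q *\<^sub>R u + r *\<^sub>R w) - k = p * (\<psi> \<bullet> v - k) + q * (\<psi> \<bullet> u - k) + r * (\<psi> \<bullet> w - k)"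
proof -
  have "k = (p + q + r) * k" using assms by simp
  then show ?thesis by (simp add: inner_add_right algebra_simps)
qed

lemma aff2_eval:
  fixes \<psi> v u :: "'a::real_inner"
  assumes "p + q = 1"
  shows "\<psi> \<bullet> (p *\<^sub>R v + q *\<^sub>R u) - k = p * (\<psi> \<bullet> v - k) + q * (\<psi> \<bullet> u - k)"
proof -
  have "k = (p + q) * k" using assms by simp
  then show ?thesis by (simp add: inner_add_right algebra_simps)
qed

lemma treetope_dim:
  assumes "treetope P B" "G face_of P" "\<And>x y. x \<in> G \<inter> B \<Longrightarrow> y \<in> G \<inter> B \<Longrightarrow> x = y"
  shows "aff_dim G \<le> 1"
  using assms unfolding treetope_def by blast

lemma two_points_dim:
  fixes G :: "'a::euclidean_space set"
  assumes "v \<in> G" "u \<in> G" "u \<noteq> v"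
  shows "aff_dim G \<ge> 1"
proof -
  have "aff_dim {v,u} = 1" using assms by simp
  then show ?thesis using aff_dim_subset[of "{v,u}" G] assms by simp
qed

lemma dim1_hull:
  fixes G :: "'a::euclidean_space set"
  assumes "v \<in> G" "u \<in> G" "u \<noteq> v" "aff_dim G \<le> 1"
  shows "G \<subseteq> affine hull {v,u}"
proof -
  have sub: "affine hull {v,u} \<subseteq> affine hull G" using assms by (intro hull_mono) auto
  have "aff_dim (affine hull {v,u}) = aff_dim (affine hull G)"
    using assms two_points_dim[OF assms(1-3)] by simp
  then have "affine hull {v,u} = affine hull G"
    by (intro affine_dim_equal[OF affine_affine_hull affine_affine_hull _ sub]) auto
  then show ?thesis using hull_subset[of G affine] by blast
qed

lemma vertex_onesided:
  fixes P B :: "'a::euclidean_space set"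
  assumes tt: "treetope P B"
   and aP: "\<And>x. x \<in> P \<Longrightarrow> a \<bullet> x \<le> b" and aB: "B = P \<inter> {x. a \<bullet> x = b}"
   and cP: "\<And>x. x \<in> P \<Longrightarrow> cc \<bullet> x \<le> dd" and cv: "{v} = P \<inter> {x. cc \<bullet> x = dd}"
   and G1: "G1 face_of P" "G1 \<inter> B = {v}" and G2: "G2 face_of P" "G2 \<inter> B = {v}"
   and u1: "u1 \<in> G1" "u1 \<noteq> v" and u2: "u2 \<in> G2" "u2 \<noteq> v"
   and ratio: "(b - a\<bullet>u1)/(dd - cc\<bullet>u1) \<le> (b - a\<bullet>u2)/(dd - cc\<bullet>u2)"
  shows "G1 = G2"
proof -
  have polyt: "polytope P" using tt by (simp add: treetope_def)
  have poly: "polyhedron P" using polyt polytope_imp_polyhedron by blast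
  have cvx: "convex P" using polyt polytope_imp_convex by blast
  have vP: "v \<in> P" and cvv: "cc \<bullet> v = dd" using cv by blast+
  have vB: "v \<in> B" using G1(2) by blast
  have av: "a \<bullet> v = b" using vB aB by blast
  have G1P: "G1 \<subseteq> P" and G2P: "G2 \<subseteq> P" using G1 G2 face_of_imp_subset by blast+
  have kpos: "cc \<bullet> x < dd" if "x \<in> P" "x \<noteq> v" for x
    using cP[OF that(1)] cv that by (metis (mono_tags, lifting) IntI less_eq_real_def mem_Collect_eq singletonD)
  have fpos: "a \<bullet> x < b" if "x \<in> P" "x \<notin> B" for x
    using aP[OF that(1)] aB that by (metis (mono_tags, lifting) IntI less_eq_real_def mem_Collect_eq)
  have u1P: "u1 \<in> P" using u1 G1P by blast
  have u2P: "u2 \<in> P" using u2 G2P by blast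
  have u1B: "u1 \<notin> B" using u1 G1(2) by blast
  have u2B: "u2 \<notin> B" using u2 G2(2) by blast
  have f1: "b - a \<bullet> u1 > 0" using fpos[OF u1P u1B] by simp
  have k1: "dd - cc \<bullet> u1 > 0" using kpos[OF u1P u1(2)] by simp
  have f2: "b - a \<bullet> u2 > 0" using fpos[OF u2P u2B] by simp
  have k2: "dd - cc \<bullet> u2 > 0" using kpos[OF u2P u2(2)] by simp
  define lam where "lam = (b - a\<bullet>u1)/(dd - cc\<bullet>u1)"
  have lpos: "lam > 0" using f1 k1 by (simp add: lam_def)
  define \<gamma> where "\<gamma> = lam *\<^sub>R cc - a"
  define cst where "cst = lam * dd - b"
  have geq: "\<gamma> \<bullet> x - cst = (b - a \<bullet> x) - lam * (dd - cc \<bullet> x)" for x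
    by (simp add: \<gamma>_def cst_def inner_diff_left algebra_simps)
  have gv: "\<gamma> \<bullet> v - cst = 0" using geq[of v] av cvv by simp
  have gu1: "\<gamma> \<bullet> u1 - cst = 0" using geq[of u1] k1 by (simp add: lam_def)
  have gu2: "\<gamma> \<bullet> u2 - cst \<ge> 0"
  proof -
    have "lam \<le> (b - a\<bullet>u2)/(dd - cc\<bullet>u2)" using ratio by (simp add: lam_def)
    then have "lam * (dd - cc\<bullet>u2) \<le> b - a\<bullet>u2" using k2 by (simp add: le_divide_eq)
    then show ?thesis using geq[of u2] by simp
  qed
  have t1: "\<And>x y. x \<in> G1 \<inter> B \<Longrightarrow> y \<in> G1 \<inter> B \<Longrightarrow> x = y" using G1(2) by simp
  have d1: "aff_dim G1 \<le> 1" using treetope_dim[OF tt G1(1) t1] .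
  have d1': "aff_dim G1 = 1" using d1 two_points_dim[of v G1 u1] u1 G1(2) by force
  have t2: "\<And>x y. x \<in> G2 \<inter> B \<Longrightarrow> y \<in> G2 \<inter> B \<Longrightarrow> x = y" using G2(2) by simp
  have d2: "aff_dim G2 \<le> 1" using treetope_dim[OF tt G2(1) t2] .
  have vG1: "v \<in> G1" and vG2: "v \<in> G2" using G1(2) G2(2) by blast+
  have G1h: "G1 \<subseteq> affine hull {v,u1}" using dim1_hull[OF vG1 u1 d1] .
  have gG1: "\<gamma> \<bullet> x = cst" if xG: "x \<in> G1" for x
  proof -
    obtain p q where pq: "x = p *\<^sub>R v + q *\<^sub>R u1" "p + q = 1"
      using G1h xG by (auto simp: affine_hull_2)
    have "\<gamma> \<bullet> x - cst = 0" using aff2_eval[OF pq(2), of \<gamma> v u1 cst] gv gu1 pq(1) by simp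
    then show ?thesis by simp
  qed
  show ?thesis
  proof (cases "\<exists>y\<in>P. \<gamma> \<bullet> y > cst")
    case False
    then have le: "\<And>x. x \<in> P \<Longrightarrow> \<gamma> \<bullet> x \<le> cst" by force
    define M where "M = P \<inter> {x. \<gamma> \<bullet> x = cst}"
    have MP: "M face_of P" unfolding M_def using face_of_Int_supporting_hyperplane_le[OF cvx] le by blast
    have u2M: "u2 \<in> M" using gu2 le[OF u2P] u2P by (simp add: M_def)
    have MB: "x = v" if "x \<in> M \<inter> B" for x
    proof (rule ccontr)
      assume "x \<noteq> v"
      then have "dd - cc \<bullet> x > 0" using kpos that M_def by force
      moreover have "b - a \<bullet> x = 0" using that aB by simp
      moreover have "\<gamma> \<bullet> x - cst = 0" using that M_def by simp
      ultimately show False using geq[of x] lpos by simp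
    qed
    have dM: "aff_dim M \<le> 1" using treetope_dim[OF tt MP] MB by blast
    have G1M: "G1 \<subseteq> M" using gG1 G1P by (auto simp: M_def)
    have G1fM: "G1 face_of M" using face_of_subset[OF G1(1) G1M face_of_imp_subset[OF MP]] .
    have cM: "convex M" using MP face_of_imp_convex by blast
    have "G1 = M" using face_of_aff_dim_lt[OF cM G1fM] d1' dM by force
    then have u2G1: "u2 \<in> G1" using u2M by simp
    define I where "I = G1 \<inter> G2"
    have IP: "I face_of P" unfolding I_def using face_of_Int[OF G1(1) G2(1)] .
    have dI: "aff_dim I \<ge> 1" using two_points_dim[of v I u2] vG1 vG2 u2G1 u2 by (auto simp: I_def)
    have IG1: "I face_of G1" using face_of_subset[OF IP _ G1P] by (auto simp: I_def)
    have IG2: "I face_of G2" using face_of_subset[OF IP _ G2P] by (auto simp: I_def)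
    have cG1: "convex G1" and cG2: "convex G2" using G1 G2 face_of_imp_convex by blast+
    have "I = G1" using face_of_aff_dim_lt[OF cG1 IG1] dI d1 by force
    moreover have "I = G2" using face_of_aff_dim_lt[OF cG2 IG2] dI d2 by force
    ultimately show ?thesis by simp
  next
    case True
    then obtain y where y: "y \<in> P" "\<gamma> \<bullet> y > cst" by blast
    have G1ne: "G1 \<noteq> {}" using vG1 by blast
    obtain E z where E: "E face_of P" "G1 \<subseteq> E" "aff_dim E = aff_dim G1 + 1" "z \<in> E" "\<gamma> \<bullet> z > cst"
      using GSM[OF poly G1(1) G1ne gG1 y] by blast
    have dE: "aff_dim E = 2" using E(3) d1' by simp
    have EP: "E \<subseteq> P" using E(1) face_of_imp_subset by blast
    have "\<not> (\<forall>x\<in>E \<inter> B. \<forall>y\<in>E \<inter> B. x = y)" using treetope_dim[OF tt E(1)] dE by force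
    then obtain w where w: "w \<in> E" "w \<in> B" "w \<noteq> v" by blast
    have wP: "w \<in> P" using w EP by blast
    have aw: "a \<bullet> w = b" using w aB by simp
    have gw: "\<gamma> \<bullet> w - cst < 0" using geq[of w] aw kpos[OF wP w(3)] lpos by (simp add: mult_pos_pos)
    have wnh: "w \<notin> affine hull {v,u1}"
    proof
      assume "w \<in> affine hull {v,u1}"
      then obtain p q where pq: "w = p *\<^sub>R v + q *\<^sub>R u1" "p + q = 1" by (auto simp: affine_hull_2)
      have "\<gamma> \<bullet> w - cst = 0" using aff2_eval[OF pq(2), of \<gamma> v u1 cst] gv gu1 pq(1) by simp
      then show False using gw by simp
    qed
    have d3: "aff_dim {w,v,u1} = 2" using aff_dim_insert[of w "{v,u1}"] wnh u1(2) by simp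
    have sub3: "affine hull {w,v,u1} \<subseteq> affine hull E"
      using w(1) vG1 u1(1) E(2) by (intro hull_mono) auto
    have "affine hull {w,v,u1} = affine hull E"
      by (intro affine_dim_equal[OF affine_affine_hull affine_affine_hull _ sub3]) (auto simp: d3 dE)
    then have "z \<in> affine hull {v,u1,w}" using E(4) hull_subset[of E affine] by (auto simp: insert_commute)
    then obtain p q r where pqr: "z = p *\<^sub>R v + q *\<^sub>R u1 + r *\<^sub>R w" "p + q + r = 1"
      by (auto simp: affine_hull_3)
    have "\<gamma> \<bullet> z - cst = r * (\<gamma> \<bullet> w - cst)"
      using aff3_eval[OF pqr(2), of \<gamma> v u1 w cst] gv gu1 pqr(1) by simp
    then have "r * (\<gamma> \<bullet> w - cst) > 0" using E(5) by simp
    then have rneg: "r < 0" using gw by (auto simp: zero_less_mult_iff)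
    have "G1 exposed_face_of P" using exposed_face_of_polyhedron[OF poly] G1(1) by blast
    moreover have "G1 \<noteq> P"
    proof
      assume "G1 = P"
      then show False using E(3) aff_dim_subset[OF EP] by simp
    qed
    ultimately obtain \<psi> k1 where psi: "P \<subseteq> {x. \<psi> \<bullet> x \<le> k1}" "G1 = P \<inter> {x. \<psi> \<bullet> x = k1}"
      using G1ne by (auto simp: exposed_face_of)
    have pv: "\<psi> \<bullet> v - k1 = 0" and pu: "\<psi> \<bullet> u1 - k1 = 0" using psi(2) vG1 u1(1) by auto
    have wG1: "w \<notin> G1" using w G1(2) by blast
    have pw: "\<psi> \<bullet> w - k1 < 0" using psi wP wG1 by force
    have "\<psi> \<bullet> z - k1 = r * (\<psi> \<bullet> w - k1)"
      using aff3_eval[OF pqr(2), of \<psi> v u1 w k1] pv pu pqr(1) by simp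
    then have "\<psi> \<bullet> z - k1 > 0" using rneg pw by (simp add: mult_neg_neg)
    moreover have "z \<in> P" using E(4) EP by blast
    ultimately show ?thesis using psi(1) by force
  qed
qed



lemma treetope_hyp:
  fixes P B :: "'a::euclidean_space set"
  assumes "treetope P B"
  obtains a b where "a \<noteq> 0" "\<And>x. x \<in> P \<Longrightarrow> a \<bullet> x \<le> b" "B = P \<inter> {x. a \<bullet> x = b}"
proof -
  have "polyhedron P" "B facet_of P" using assms polytope_imp_polyhedron by (auto simp: treetope_def)
  from facet_of_polyhedron[OF this] obtain a b where "a \<noteq> 0" "P \<subseteq> {x. a \<bullet> x \<le> b}" "B = P \<inter> {x. a \<bullet> x = b}" .
  then show ?thesis by (intro that) auto
qed

lemma exposed_hyp:
  fixes P G :: "'a::euclidean_space set"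
  assumes "polyhedron P" "G face_of P" "G \<noteq> {}" "G \<noteq> P"
  obtains \<psi> k where "P \<subseteq> {x. \<psi> \<bullet> x \<le> k}" "G = P \<inter> {x. \<psi> \<bullet> x = k}"
proof -
  have ex: "G exposed_face_of P" using exposed_face_of_polyhedron[OF assms(1)] assms(2) by blast
  have "G face_of P \<and> (G = {} \<or> G = P \<or> (\<exists>a b. a \<noteq> 0 \<and> P \<subseteq> {x. a \<bullet> x \<le> b} \<and> G = P \<inter> {x. a \<bullet> x = b}))"
    using exposed_face_of[THEN iffD1, OF ex] .
  then have "\<exists>a b. P \<subseteq> {x. a \<bullet> x \<le> b} \<and> G = P \<inter> {x. a \<bullet> x = b}" using assms(3,4) by blast
  then show ?thesis using that by blast
qed

lemma vertex_unique:
  fixes P B :: "'a::euclidean_space set"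
  assumes tt: "treetope P B" and v: "{v} face_of P" "v \<in> B"
   and G1: "G1 face_of P" "G1 \<inter> B = {v}" "G1 \<noteq> {v}"
   and G2: "G2 face_of P" "G2 \<inter> B = {v}" "G2 \<noteq> {v}"
  shows "G1 = G2"
proof -
  obtain a b where ab: "a \<noteq> 0" "\<And>x. x \<in> P \<Longrightarrow> a \<bullet> x \<le> b" "B = P \<inter> {x. a \<bullet> x = b}"
    using treetope_hyp[OF tt] by blast
  have poly: "polyhedron P" using tt polytope_imp_polyhedron by (auto simp: treetope_def)
  have vG1: "v \<in> G1" and vG2: "v \<in> G2" using G1(2) G2(2) by blast+
  obtain u1 where u1: "u1 \<in> G1" "u1 \<noteq> v" using G1(3) vG1 by blast
  obtain u2 where u2: "u2 \<in> G2" "u2 \<noteq> v" using G2(3) vG2 by blast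
  have "{v} \<noteq> P" using u1 G1(1) face_of_imp_subset by blast
  then obtain cc dd where cd: "P \<subseteq> {x. cc \<bullet> x \<le> dd}" "{v} = P \<inter> {x. cc \<bullet> x = dd}"
    using exposed_hyp[OF poly v(1)] by blast
  have cP: "\<And>x. x \<in> P \<Longrightarrow> cc \<bullet> x \<le> dd" using cd(1) by blast
  show ?thesis
  proof (cases "(b - a\<bullet>u1)/(dd - cc\<bullet>u1) \<le> (b - a\<bullet>u2)/(dd - cc\<bullet>u2)")
    case True
    show ?thesis using vertex_onesided[OF tt ab(2,3) cP cd(2) G1(1,2) G2(1,2) u1 u2 True] .
  next
    case False
    then have "(b - a\<bullet>u2)/(dd - cc\<bullet>u2) \<le> (b - a\<bullet>u1)/(dd - cc\<bullet>u1)" by linarith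
    then show ?thesis using vertex_onesided[OF tt ab(2,3) cP cd(2) G2(1,2) G1(1,2) u2 u1] by simp
  qed
qed

lemma edge_exists:
  fixes Q :: "'a::euclidean_space set"
  assumes poly: "polyhedron Q" and v: "{v} face_of Q"
    and psi: "\<And>x. x \<in> Q \<Longrightarrow> \<psi> \<bullet> x \<le> k" "\<psi> \<bullet> v = k" and y: "y \<in> Q" "\<psi> \<bullet> y < k"
  shows "\<exists>E. E face_of Q \<and> v \<in> E \<and> aff_dim E = 1 \<and> (\<exists>z\<in>E. \<psi> \<bullet> z < k)"
proof -
  have "\<exists>E. E face_of Q \<and> {v} \<subseteq> E \<and> aff_dim E = aff_dim {v} + 1 \<and> (\<exists>z\<in>E. (-\<psi>) \<bullet> z > -k)"
    by (rule GSM[OF poly v]) (use psi y in auto)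
  then obtain E z where "E face_of Q" "{v} \<subseteq> E" "aff_dim E = aff_dim {v} + 1" "z \<in> E" "(-\<psi>) \<bullet> z > -k"
    by blast
  then show ?thesis by (intro exI[of _ E]) auto
qed

lemma meet_single:
  fixes P B E :: "'a::euclidean_space set"
  assumes "E face_of P" "B face_of P" "v \<in> E" "v \<in> B" "aff_dim E = 1" "\<not> E \<subseteq> B"
  shows "E \<inter> B = {v}"
proof -
  have IP: "(E \<inter> B) face_of P" using face_of_Int assms by blast
  have IE: "(E \<inter> B) face_of E" using face_of_subset[OF IP _ face_of_imp_subset[OF assms(1)]] by blast
  have cE: "convex E" using assms(1) face_of_imp_convex by blast
  have "E \<inter> B \<noteq> E" using assms by blast
  then have "aff_dim (E \<inter> B) < 1" using face_of_aff_dim_lt[OF cE IE] assms by simp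
  moreover have "E \<inter> B \<noteq> {}" using assms by blast
  then have "aff_dim (E \<inter> B) \<noteq> -1" by (metis aff_dim_empty)
  ultimately have "aff_dim (E \<inter> B) = 0" using aff_dim_geq[of "E \<inter> B"] by linarith
  then obtain w where w: "E \<inter> B = {w}" by (metis aff_dim_eq_0)
  moreover have "v \<in> E \<inter> B" using assms(3,4) by blast
  ultimately show ?thesis by simp
qed

lemma lift_sub:
  fixes P B F :: "'a::euclidean_space set"
  assumes tt: "treetope P B" and F: "F face_of B" "F \<noteq> {}"
    and G1: "G1 face_of P" "G1 \<noteq> F" "G1 \<inter> B = F"
    and G2: "G2 face_of P" "G2 \<noteq> F" "G2 \<inter> B = F"
  shows "G1 \<subseteq> G2"
proof (rule ccontr)
  assume nsub: "\<not> G1 \<subseteq> G2"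
  obtain a b where ab: "a \<noteq> 0" "\<And>x. x \<in> P \<Longrightarrow> a \<bullet> x \<le> b" "B = P \<inter> {x. a \<bullet> x = b}"
    using treetope_hyp[OF tt] by blast
  have polyt: "polytope P" and BP: "B facet_of P" using tt by (auto simp: treetope_def)
  have poly: "polyhedron P" using polyt polytope_imp_polyhedron by blast
  have BfP: "B face_of P" using BP facet_of_imp_face_of by blast
  have FP: "F face_of P" using face_of_trans[OF F(1) BfP] .
  have polF: "polytope F" using face_of_polytope_polytope[OF polyt FP] .
  obtain v where "v extreme_point_of F"
    using extreme_point_exists_convex[of F] polF polytope_imp_compact polytope_imp_convex F(2) by blast
  then have vF: "{v} face_of F" by (simp add: face_of_singleton)
  have vP: "{v} face_of P" using face_of_trans[OF vF FP] .
  have vFm: "v \<in> F" using vF face_of_imp_subset by blast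
  have vB: "v \<in> B" using vFm G1(3) by blast
  have G1P: "G1 \<subseteq> P" and G2P: "G2 \<subseteq> P" using G1(1) G2(1) face_of_imp_subset by blast+
  define G where "G = G1 \<inter> G2"
  have GP: "G face_of P" unfolding G_def using face_of_Int[OF G1(1) G2(1)] .
  have GG1: "G face_of G1" using face_of_subset[OF GP _ G1P] by (auto simp: G_def)
  have FG: "F \<subseteq> G" using G1(3) G2(3) by (auto simp: G_def)
  have polG1: "polyhedron G1" using face_of_polyhedron_polyhedron[OF poly G1(1)] .
  have polG2: "polyhedron G2" using face_of_polyhedron_polyhedron[OF poly G2(1)] .
  have "G \<noteq> G1" using nsub by (auto simp: G_def)
  moreover have "G \<noteq> {}" using FG F(2) by blast
  ultimately obtain \<psi> k where psi: "G1 \<subseteq> {x. \<psi> \<bullet> x \<le> k}" "G = G1 \<inter> {x. \<psi> \<bullet> x = k}"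
    using exposed_hyp[OF polG1 GG1] by blast
  obtain y where y: "y \<in> G1" "y \<notin> G" using \<open>G \<noteq> G1\<close> GG1 face_of_imp_subset by blast
  have yk: "\<psi> \<bullet> y < k" using psi y by force
  have vG1: "{v} face_of G1" using face_of_subset[OF vP _ G1P] vFm G1(3) by blast
  have vk: "\<psi> \<bullet> v = k" using psi(2) vFm FG by blast
  obtain E z where E: "E face_of G1" "v \<in> E" "aff_dim E = 1" and z: "z \<in> E" "\<psi> \<bullet> z < k"
    using edge_exists[OF polG1 vG1 _ vk y(1) yk] psi(1) by blast
  have zG: "z \<notin> G" using z psi(2) by force
  have EP: "E face_of P" using face_of_trans[OF E(1) G1(1)] .
  have EG1: "E \<subseteq> G1" using E(1) face_of_imp_subset by blast
  have EnB: "\<not> E \<subseteq> B"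
  proof
    assume "E \<subseteq> B"
    then have "z \<in> F" using z(1) EG1 G1(3) by blast
    then show False using zG FG by blast
  qed
  have EB: "E \<inter> B = {v}" using meet_single[OF EP BfP E(2) vB E(3) EnB] .
  have Ev: "E \<noteq> {v}" using E(3) by auto
  have "\<not> G2 \<subseteq> B" using G2(2,3) by blast
  then obtain y2 where y2: "y2 \<in> G2" "y2 \<notin> B" by blast
  have ay2: "a \<bullet> y2 < b" using ab(2)[of y2] ab(3) y2 G2P by force
  have vG2: "{v} face_of G2" using face_of_subset[OF vP _ G2P] vFm G2(3) by blast
  have av: "a \<bullet> v = b" using vB ab(3) by blast
  obtain E' z' where E': "E' face_of G2" "v \<in> E'" "aff_dim E' = 1" and z': "z' \<in> E'" "a \<bullet> z' < b"
    using edge_exists[OF polG2 vG2 _ av y2(1) ay2] ab(2) G2P by blast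
  have E'P: "E' face_of P" using face_of_trans[OF E'(1) G2(1)] .
  have E'nB: "\<not> E' \<subseteq> B" using z' ab(3) by force
  have E'B: "E' \<inter> B = {v}" using meet_single[OF E'P BfP E'(2) vB E'(3) E'nB] .
  have E'v: "E' \<noteq> {v}" using E'(3) by auto
  have "E = E'" using vertex_unique[OF tt vP vB EP EB Ev E'P E'B E'v] .
  then have "E \<subseteq> G2" using E'(1) face_of_imp_subset by blast
  then have "z \<in> G" using z(1) EG1 by (auto simp: G_def)
  then show False using zG by blast
qed



theorem mainTheorem4:
  fixes P B F :: "'a::euclidean_space set"
  assumes "treetope P B"
    and "F face_of B"
    and "F \<noteq> {}"
  shows "\<exists>!F'. F' face_of P \<and> F' \<noteq> F \<and> F' \<inter> B = F"
proof -
  note tt = assms(1)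
  obtain a b where ab: "a \<noteq> 0" "\<And>x. x \<in> P \<Longrightarrow> a \<bullet> x \<le> b" "B = P \<inter> {x. a \<bullet> x = b}"
    using treetope_hyp[OF tt] by blast
  have polyt: "polytope P" and BP: "B facet_of P" using tt by (auto simp: treetope_def)
  have poly: "polyhedron P" using polyt polytope_imp_polyhedron by blast
  have BfP: "B face_of P" using BP facet_of_imp_face_of by blast
  have FP: "F face_of P" using face_of_trans[OF assms(2) BfP] .
  have FB: "F \<subseteq> B" using assms(2) face_of_imp_subset by blast
  have "B \<noteq> P" using BP by auto
  then obtain y where y: "y \<in> P" "y \<notin> B" using BfP face_of_imp_subset by blast
  have ay: "(-a) \<bullet> y > -b" using ab(2)[OF y(1)] ab(3) y by force
  have gF: "\<And>x. x \<in> F \<Longrightarrow> (-a) \<bullet> x = -b" using FB ab(3) by auto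
  obtain E z where E: "E face_of P" "F \<subseteq> E" "aff_dim E = aff_dim F + 1" and z: "z \<in> E" "(-a) \<bullet> z > -b"
    using GSM[OF poly FP assms(3) gF y(1) ay] by blast
  have zB: "z \<notin> B" using z(2) ab(3) by auto
  have EP: "E \<subseteq> P" using E(1) face_of_imp_subset by blast
  define I where "I = E \<inter> B"
  have IP: "I face_of P" unfolding I_def using face_of_Int[OF E(1) BfP] .
  have IE: "I face_of E" using face_of_subset[OF IP _ EP] by (auto simp: I_def)
  have cE: "convex E" using E(1) face_of_imp_convex by blast
  have "I \<noteq> E" using z zB by (auto simp: I_def)
  then have dI: "aff_dim I < aff_dim E" using face_of_aff_dim_lt[OF cE IE] by blast
  have FI: "F \<subseteq> I" using E(2) FB by (auto simp: I_def)
  have IP': "I \<subseteq> P" using IP face_of_imp_subset by blast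
  have FfI: "F face_of I" using face_of_subset[OF FP FI IP'] .
  have cI: "convex I" using IP face_of_imp_convex by blast
  have EB: "E \<inter> B = F"
  proof (rule ccontr)
    assume "E \<inter> B \<noteq> F"
    then have "F \<noteq> I" by (simp add: I_def)
    then have "aff_dim F < aff_dim I" using face_of_aff_dim_lt[OF cI FfI] by blast
    then show False using dI E(3) by linarith
  qed
  have EF: "E \<noteq> F" using z zB FB by blast
  show ?thesis
  proof (rule ex1I[of _ E])
    show "E face_of P \<and> E \<noteq> F \<and> E \<inter> B = F" using E(1) EF EB by blast
  next
    fix G assume G: "G face_of P \<and> G \<noteq> F \<and> G \<inter> B = F"
    have "G \<subseteq> E" using lift_sub[OF tt assms(2,3)] G E(1) EF EB by blast
    moreover have "E \<subseteq> G" using lift_sub[OF tt assms(2,3)] G E(1) EF EB by blast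
    ultimately show "G = E" by blast
  qed
qed


end
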